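(* Let $k>0$ and $g(u;a)=u(1-u)(u-a)$. Define $$a_*^+(k)=\frac{\sqrt{4k+k^2}-k}{2},\qquad a_1^+(k)=\min\Big\{\frac{2\sqrt k}{2+\sqrt k},1\Big\},$$ and for $a_*^+(k)\le a\le 1$, $$d^+_{\min}(a,k)=\frac{2a^2+a(k-4)+4-k-2(2-a)\sqrt{a^2+ka-k}}{(4+k)^2},$$ $$d^+_{\max}(a,k)=\begin{cases}\dfrac{a^2}{4k}, & a\in(a_1^+(k),1],\\[2mm]\dfrac{2a^2+a(k-4)+4-k+2(2-a)\sqrt{a^2+ka-k}}{(4+k)^2}, & a\in[a_*^+(k),a_1^+(k)].\end{cases}$$ Then: (i) $d^+_{\min},d^+_{\max}\in C([a_*^+(k),1]\times(0,\infty);\mathbb R)$ and $0\le d^+_{\min}(a,k)\le d^+_{\max}(a,k)\le d^+(a,k)$ for all $a\in[a_*^+(k),1]$, where $d^+(a,k)=\max_{y\in(1-a,1)}\frac{-g(1-y;a)}{ky}$; (ii) $d^+_{\max}(a_*^+(k),k)=d^+_{\min}(a_*^+(k),k)$; (iii) $$\mathcal D^+(k)=\{(a,d)\in\mathcal H:\ a>a_*^+(k),\ d^+_{\min}(a,k)<d<d^+_{\max}(a,k)\}.$$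
   Context: Let $\mathcal H=(0,1)\times(0,\infty)$. For a nonlinearity $f(u;a)$, $K>0$, $a,A\in(0,1)$ let $d^\diamond_{f,K}(A;a)=\inf\{d>0:\ d(K+1)(A-v)-f(A;a)\ge -f(v;a)\ \forall v\in[0,A]\}$ and $\mathcal D^-_f(K)=\{(a,d)\in\mathcal H:\ d^\diamond_{f,K}(A;a)<d<f(A;a)/A$ for some $A\in(a,1)\}$. With $\tilde g(v;b):=-g(1-v;1-b)$ (for the cubic, $\tilde g=g$), define $\mathcal D^+(k)=\{(a,d)\in\mathcal H:\ (1-a,dk)\in\mathcal D^-_{\tilde g}(1/k)\}$. *)

theory Defs
  imports "HOL-Analysis.Analysis"
begin

definition H_strip :: "(real \<times> real) set" where
  "H_strip = {0<..<1} \<times> {0<..}"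

definition gcub :: "real \<Rightarrow> real \<Rightarrow> real" where
  "gcub u a = u * (1 - u) * (u - a)"

definition d_diamond :: "(real \<Rightarrow> real \<Rightarrow> real) \<Rightarrow> real \<Rightarrow> real \<Rightarrow> real \<Rightarrow> real" where
  "d_diamond f K A a =
     Inf {d. d > 0 \<and> (\<forall>v\<in>{0..A}. d * (K + 1) * (A - v) - f A a \<ge> - f v a)}"

definition D_minus :: "(real \<Rightarrow> real \<Rightarrow> real) \<Rightarrow> real \<Rightarrow> (real \<times> real) set" where
  "D_minus f K = {(a, d). (a, d) \<in> H_strip \<and>
      (\<exists>A\<in>{a<..<1}. d_diamond f K A a < d \<and> d < f A a / A)}"

definition reflect_nl :: "(real \<Rightarrow> real \<Rightarrow> real) \<Rightarrow> real \<Rightarrow> real \<Rightarrow> real" where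
  "reflect_nl g v b = - g (1 - v) (1 - b)"

definition D_plus :: "real \<Rightarrow> (real \<times> real) set" where
  "D_plus k = {(a, d). (a, d) \<in> H_strip \<and> (1 - a, d * k) \<in> D_minus (reflect_nl gcub) (1 / k)}"

definition a_star_plus :: "real \<Rightarrow> real" where
  "a_star_plus k = (sqrt (4 * k + k\<^sup>2) - k) / 2"

definition a_one_plus :: "real \<Rightarrow> real" where
  "a_one_plus k = min (2 * sqrt k / (2 + sqrt k)) 1"

definition d_min_plus :: "real \<Rightarrow> real \<Rightarrow> real" where
  "d_min_plus a k =
     (2 * a\<^sup>2 + a * (k - 4) + 4 - k - 2 * (2 - a) * sqrt (a\<^sup>2 + k * a - k)) / (4 + k)\<^sup>2"

definition d_max_plus :: "real \<Rightarrow> real \<Rightarrow> real" where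
  "d_max_plus a k =
     (if a_one_plus k < a then a\<^sup>2 / (4 * k)
      else (2 * a\<^sup>2 + a * (k - 4) + 4 - k + 2 * (2 - a) * sqrt (a\<^sup>2 + k * a - k)) / (4 + k)\<^sup>2)"

text \<open>d^+(a,k) = max over y in (1-a,1) of -g(1-y;a)/(k y) (the maximum is attained,
  so it equals the supremum).\<close>
definition d_plus :: "real \<Rightarrow> real \<Rightarrow> real" where
  "d_plus a k = Sup ((\<lambda>y. - gcub (1 - y) a / (k * y)) ` {1 - a<..<1})"

end

theory Submission
  imports Defs
begin
lemma astar_facts:
  fixes k :: real assumes k: "k > 0"
  shows "0 < a_star_plus k" "a_star_plus k < 1"
        "(a_star_plus k)\<^sup>2 + k * a_star_plus k - k = 0"
proof -
  define S where "S = sqrt (4 * k + k\<^sup>2)"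
  have "0 \<le> k\<^sup>2" by simp
  then have nn: "0 \<le> 4 * k + k\<^sup>2" using k by linarith
  have S2: "S\<^sup>2 = 4*k + k\<^sup>2" unfolding S_def using nn by (rule real_sqrt_pow2)
  have S0: "S \<ge> 0" unfolding S_def using nn by simp
  have "S > k"
  proof (rule ccontr)
    assume "\<not> S > k" then have "S\<^sup>2 \<le> k\<^sup>2" using S0 k by (simp add: power_mono)
    then show False using S2 k by simp
  qed
  moreover have "S < k + 2"
  proof (rule ccontr)
    assume "\<not> S < k+2" then have "(k+2)\<^sup>2 \<le> S\<^sup>2" using S0 k by (simp add: power_mono)
    then show False using S2 k by (simp add: power2_eq_square algebra_simps)
  qed
  ultimately show "0 < a_star_plus k" "a_star_plus k < 1"
    unfolding a_star_plus_def S_def[symmetric] by auto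
  show "(a_star_plus k)\<^sup>2 + k * a_star_plus k - k = 0"
    unfolding a_star_plus_def S_def[symmetric]
    by (simp add: power2_eq_square field_simps S2[unfolded power2_eq_square])
qed

lemma delta_factor:
  fixes k a :: real assumes k: "k > 0"
  shows "a\<^sup>2 + k*a - k = (a - a_star_plus k) * (a + a_star_plus k + k)"
  using astar_facts(3)[OF k] by (simp add: algebra_simps power2_eq_square)

lemma delta_nonneg:
  fixes k a :: real assumes k: "k > 0" and a: "a_star_plus k \<le> a"
  shows "a\<^sup>2 + k*a - k \<ge> 0"
  using delta_factor[OF k, of a] astar_facts[OF k] a k by simp

lemma delta_pos_iff:
  fixes k a :: real assumes k: "k > 0" and a: "a > 0"
  shows "a\<^sup>2 + k*a - k > 0 \<longleftrightarrow> a_star_plus k < a"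
  using delta_factor[OF k, of a] astar_facts[OF k] a k
  by (simp add: zero_less_mult_iff add_pos_pos)

definition qq :: "real \<Rightarrow> real \<Rightarrow> real \<Rightarrow> real" where
  "qq A b v = - v\<^sup>2 + (1 + b - A) * v + (1 - A) * (A - b)"

lemma reflect_gcub: "reflect_nl gcub = gcub"
  by (intro ext) (simp add: reflect_nl_def gcub_def algebra_simps)

lemma g_diff: "gcub A b - gcub v b = (A - v) * qq A b v"
  by (simp add: gcub_def qq_def algebra_simps power2_eq_square)

lemma qq_le: "qq A b v \<le> (1 - A) * (A - b) + (1 + b - A)\<^sup>2 / 4"
proof -
  have "0 \<le> (v - (1 + b - A)/2)\<^sup>2" by simp
  then show ?thesis by (simp add: qq_def power2_eq_square algebra_simps)
qed

lemma qq_closure: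
  assumes A: "A > 0" and h: "\<forall>v\<in>{0..<A}. qq A b v \<le> c"
  shows "qq A b A \<le> c"
proof -
  have "isCont (qq A b) A" unfolding qq_def by (intro continuous_intros)
  then have "(qq A b \<longlongrightarrow> qq A b A) (at A)" by (simp add: isCont_def)
  then have lim: "(qq A b \<longlongrightarrow> qq A b A) (at_left A)"
    by (rule tendsto_mono[rotated]) (simp add: at_le)
  have "eventually (\<lambda>x. x \<in> {0<..<A}) (at_left A)"
    using A by (rule eventually_at_left_real)
  then have ev: "eventually (\<lambda>x. qq A b x \<le> c) (at_left A)"
    by (rule eventually_mono) (use h in auto)
  show ?thesis
    using tendsto_upperbound[OF lim ev] by (simp add: trivial_limit_at_left_real)
qed

lemma diamond_set_iff:
  "(d > 0 \<and> (\<forall>v\<in>{0..A}. d * (K + 1) * (A - v) - gcub A b \<ge> - gcub v b))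
    \<longleftrightarrow> (d > 0 \<and> (\<forall>v\<in>{0..A}. (A - v) * qq A b v \<le> d * (K + 1) * (A - v)))"
proof -
  have "\<And>v. (d * (K + 1) * (A - v) - gcub A b \<ge> - gcub v b) \<longleftrightarrow> ((A - v) * qq A b v \<le> d * (K + 1) * (A - v))"
    using g_diff[of A b] by (metis diff_le_eq le_diff_eq minus_diff_eq neg_le_iff_le diff_minus_eq_add add.commute)
  then show ?thesis by simp
qed

lemma diamond_suff:
  assumes b: "b < A" "A < 1" and K: "K > 0"
    and c: "(1 - A) * (A - b) + (1 + b - A)\<^sup>2 / 4 < (K + 1) * D"
  shows "d_diamond gcub K A b < D"
proof -
  define c where "c = (1 - A) * (A - b) + (1 + b - A)\<^sup>2 / 4"
  have cpos: "c > 0" unfolding c_def using b by (intro add_pos_nonneg) auto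
  define d' where "d' = c / (K + 1)"
  let ?S = "{d. d > 0 \<and> (\<forall>v\<in>{0..A}. d * (K + 1) * (A - v) - gcub A b \<ge> - gcub v b)}"
  have mem: "d' \<in> ?S"
  proof -
    have "d' > 0" unfolding d'_def using cpos K by simp
    moreover have "\<forall>v\<in>{0..A}. (A - v) * qq A b v \<le> d' * (K + 1) * (A - v)"
    proof
      fix v assume v: "v \<in> {0..A}"
      have "d' * (K + 1) = c" unfolding d'_def using K by simp
      then have "d' * (K + 1) * (A - v) = (A - v) * c" by simp
      moreover have "(A - v) * qq A b v \<le> (A - v) * c"
        using v qq_le[of A b v] unfolding c_def by (intro mult_left_mono) auto
      ultimately show "(A - v) * qq A b v \<le> d' * (K + 1) * (A - v)" by linarith
    qed
    ultimately show ?thesis unfolding mem_Collect_eq diamond_set_iff by blast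
  qed
  have "bdd_below ?S" by (rule bdd_belowI[of _ 0]) auto
  then have "d_diamond gcub K A b \<le> d'"
    unfolding d_diamond_def using mem by (rule cInf_lower[rotated])
  moreover have "d' < D" unfolding d'_def using c K unfolding c_def[symmetric]
    by (simp add: divide_less_eq mult.commute)
  ultimately show ?thesis by simp
qed

lemma diamond_nec:
  assumes b: "b < A" "A < 1" "0 < b" and K: "K > 0"
    and dd: "d_diamond gcub K A b < D"
  shows "\<forall>v\<in>{0..A}. qq A b v < (K + 1) * D"
proof -
  define c where "c = (1 - A) * (A - b) + (1 + b - A)\<^sup>2 / 4"
  have cpos: "c > 0" unfolding c_def using b by (intro add_pos_nonneg) auto
  define d' where "d' = c / (K + 1)"
  let ?S = "{d. d > 0 \<and> (\<forall>v\<in>{0..A}. d * (K + 1) * (A - v) - gcub A b \<ge> - gcub v b)}"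
  have mem: "d' \<in> ?S"
  proof -
    have "d' > 0" unfolding d'_def using cpos K by simp
    moreover have "\<forall>v\<in>{0..A}. (A - v) * qq A b v \<le> d' * (K + 1) * (A - v)"
    proof
      fix v assume v: "v \<in> {0..A}"
      have "d' * (K + 1) = c" unfolding d'_def using K by simp
      then have "d' * (K + 1) * (A - v) = (A - v) * c" by simp
      moreover have "(A - v) * qq A b v \<le> (A - v) * c"
        using v qq_le[of A b v] unfolding c_def by (intro mult_left_mono) auto
      ultimately show "(A - v) * qq A b v \<le> d' * (K + 1) * (A - v)" by linarith
    qed
    ultimately show ?thesis unfolding mem_Collect_eq diamond_set_iff by blast
  qed
  have "bdd_below ?S" by (rule bdd_belowI[of _ 0]) auto
  then obtain x where x: "x \<in> ?S" "x < D"
    using dd mem unfolding d_diamond_def by (subst (asm) cInf_less_iff) auto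
  have x2: "\<forall>v\<in>{0..A}. (A - v) * qq A b v \<le> x * (K + 1) * (A - v)"
    using x(1) unfolding mem_Collect_eq diamond_set_iff by blast
  have lt: "\<forall>v\<in>{0..<A}. qq A b v \<le> x * (K + 1)"
  proof
    fix v assume v: "v \<in> {0..<A}"
    then have "(A - v) * qq A b v \<le> (A - v) * (x * (K + 1))" using x2 by (simp add: mult.commute)
    then show "qq A b v \<le> x * (K + 1)" using v by (simp add: mult_le_cancel_left)
  qed
  have "qq A b A \<le> x * (K + 1)" using b by (intro qq_closure lt) auto
  moreover have "x * (K + 1) < (K + 1) * D" using x(2) K by (simp add: mult.commute)
  ultimately show ?thesis using lt by (metis atLeastAtMost_iff atLeastLessThan_iff le_less le_less_trans)
qed

lemma d_plus_eq:
  assumes a: "0 < a" "a \<le> 1" and k: "k > 0"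
  shows "d_plus a k = a\<^sup>2 / (4 * k)"
proof -
  let ?f = "\<lambda>y. - gcub (1 - y) a / (k * y)"
  have f: "?f y = (1 - y) * (y - (1 - a)) / k" if "y > 0" for y
    using that k by (simp add: gcub_def field_simps)
  show ?thesis unfolding d_plus_def
  proof (rule cSup_eq_maximum)
    have m: "1 - a/2 \<in> {1 - a<..<1}" using a by auto
    have e: "?f (1 - a/2) = a\<^sup>2 / (4 * k)"
      using f[of "1 - a/2"] a by (simp add: field_simps power2_eq_square)
    show "a\<^sup>2 / (4 * k) \<in> ?f ` {1 - a<..<1}" by (rule image_eqI[where f="?f", OF e[symmetric] m])
  next
    fix z assume "z \<in> ?f ` {1 - a<..<1}"
    then obtain y where y: "y \<in> {1 - a<..<1}" "z = ?f y" by auto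
    have "y > 0" using y a by auto
    have "(1 - y) * (y - (1 - a)) \<le> a\<^sup>2/4"
    proof -
      have "0 \<le> ((1 - y) - (y - (1 - a)))\<^sup>2" by simp
      then show ?thesis by (simp add: power2_eq_square algebra_simps)
    qed
    then have "(1 - y) * (y - (1 - a)) / k \<le> (a\<^sup>2/4) / k"
      using k by (intro divide_right_mono) auto
    then show "z \<le> a\<^sup>2 / (4 * k)" using y(2) f[OF \<open>y > 0\<close>] by simp
  qed
qed

lemma quad_ident:
  fixes k a x :: real
  shows "(k+4) * ((k+4)*x\<^sup>2 - 2*(2-a)*x + (1-a)) = ((k+4)*x - (2-a))\<^sup>2 - (a\<^sup>2 + k*a - k)"
  by (simp add: power2_eq_square algebra_simps)

lemma quad_neg_imp:
  fixes k a x :: real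
  assumes k: "k > 0" and q: "(k+4)*x\<^sup>2 - 2*(2-a)*x + (1-a) < 0"
  shows "a\<^sup>2 + k*a - k > 0"
    "(2 - a - sqrt (a\<^sup>2 + k*a - k)) / (k+4) < x"
    "x < (2 - a + sqrt (a\<^sup>2 + k*a - k)) / (k+4)"
proof -
  have "(k+4) * ((k+4)*x\<^sup>2 - 2*(2-a)*x + (1-a)) < 0"
    using q k by (simp add: mult_pos_neg)
  then have lt: "((k+4)*x - (2-a))\<^sup>2 < a\<^sup>2 + k*a - k" using quad_ident[of k x a] by simp
  then show "a\<^sup>2 + k*a - k > 0" by (smt (verit) zero_le_power2)
  have "sqrt (((k+4)*x - (2-a))\<^sup>2) < sqrt (a\<^sup>2 + k*a - k)" using lt by (simp only: real_sqrt_less_iff)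
  then have ab: "\<bar>(k+4)*x - (2-a)\<bar> < sqrt (a\<^sup>2 + k*a - k)" by simp
  have k4: "k + 4 > 0" using k by simp
  show "(2 - a - sqrt (a\<^sup>2 + k*a - k)) / (k+4) < x"
    using ab k4 by (simp add: divide_less_eq abs_less_iff algebra_simps)
  show "x < (2 - a + sqrt (a\<^sup>2 + k*a - k)) / (k+4)"
    using ab k4 by (simp add: less_divide_eq abs_less_iff algebra_simps)
qed

lemma quad_neg_of:
  fixes k a x :: real
  assumes k: "k > 0" and De: "a\<^sup>2 + k*a - k \<ge> 0"
    and l: "(2 - a - sqrt (a\<^sup>2 + k*a - k)) / (k+4) < x"
    and u: "x < (2 - a + sqrt (a\<^sup>2 + k*a - k)) / (k+4)"
  shows "(k+4)*x\<^sup>2 - 2*(2-a)*x + (1-a) < 0"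
proof -
  define D where "D = sqrt (a\<^sup>2 + k*a - k)"
  have D2: "D\<^sup>2 = a\<^sup>2 + k*a - k" unfolding D_def using De by simp
  have k4: "k + 4 > 0" using k by simp
  have l': "2 - a - D < x * (k+4)" using l k4 unfolding D_def[symmetric] by (simp add: pos_divide_less_eq)
  have u': "x * (k+4) < 2 - a + D" using u k4 unfolding D_def[symmetric] by (simp add: pos_less_divide_eq)
  have "\<bar>(k+4)*x - (2-a)\<bar> < D"
    using l' u' by (simp add: abs_less_iff algebra_simps)
  then have "\<bar>(k+4)*x - (2-a)\<bar>\<^sup>2 < D\<^sup>2"
    by (intro power_strict_mono) auto
  then have "((k+4)*x - (2-a))\<^sup>2 < D\<^sup>2" by simp
  then have "(k+4) * ((k+4)*x\<^sup>2 - 2*(2-a)*x + (1-a)) < 0" using quad_ident[of k x a] D2 by simp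
  then show ?thesis using k4 by (simp add: mult_less_0_iff)
qed

lemma D_facts:
  fixes k a :: real
  assumes k: "k > 0" and De: "a\<^sup>2 + k*a - k \<ge> 0" and a1: "a \<le> 1"
  shows "sqrt (a\<^sup>2 + k*a - k) \<le> 2 - a"
    "(sqrt (a\<^sup>2 + k*a - k))\<^sup>2 = a\<^sup>2 + k*a - k"
    "(2 - a - sqrt (a\<^sup>2 + k*a - k)) * (2 - a + sqrt (a\<^sup>2 + k*a - k)) = (k+4)*(1-a)"
proof -
  define D where "D = sqrt (a\<^sup>2 + k*a - k)"
  show D2: "(sqrt (a\<^sup>2 + k*a - k))\<^sup>2 = a\<^sup>2 + k*a - k" using De by simp
  have e: "(2-a)\<^sup>2 - (a\<^sup>2 + k*a - k) = (k+4)*(1-a)" by (simp add: power2_eq_square algebra_simps)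
  have "(k+4)*(1-a) \<ge> 0" using k a1 by (intro mult_nonneg_nonneg) auto
  then have "a\<^sup>2 + k*a - k \<le> (2-a)\<^sup>2" using e by linarith
  then show "sqrt (a\<^sup>2 + k*a - k) \<le> 2 - a" using a1 by (simp add: real_sqrt_le_iff real_le_lsqrt)
  show "(2 - a - sqrt (a\<^sup>2 + k*a - k)) * (2 - a + sqrt (a\<^sup>2 + k*a - k)) = (k+4)*(1-a)"
    using D2 by (simp add: power2_eq_square algebra_simps)
qed

lemma dmin_eq:
  fixes k a :: real
  assumes k: "k > 0" and De: "a\<^sup>2 + k*a - k \<ge> 0"
  shows "d_min_plus a k = ((2 - a - sqrt (a\<^sup>2 + k*a - k)) / (k+4))\<^sup>2"
proof -
  have D2: "(sqrt (a\<^sup>2 + k*a - k))\<^sup>2 = a\<^sup>2 + k*a - k" using De by simp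
  have "(2 - a - sqrt (a\<^sup>2 + k*a - k))\<^sup>2 = 2 * a\<^sup>2 + a * (k - 4) + 4 - k - 2 * (2 - a) * sqrt (a\<^sup>2 + k * a - k)"
    using D2 by (simp add: power2_eq_square algebra_simps)
  then show ?thesis unfolding d_min_plus_def by (simp add: power_divide add.commute)
qed

lemma dmax2_eq:
  fixes k a :: real
  assumes k: "k > 0" and De: "a\<^sup>2 + k*a - k \<ge> 0" and nb: "\<not> a_one_plus k < a"
  shows "d_max_plus a k = ((2 - a + sqrt (a\<^sup>2 + k*a - k)) / (k+4))\<^sup>2"
proof -
  have D2: "(sqrt (a\<^sup>2 + k*a - k))\<^sup>2 = a\<^sup>2 + k*a - k" using De by simp
  have "(2 - a + sqrt (a\<^sup>2 + k*a - k))\<^sup>2 = 2 * a\<^sup>2 + a * (k - 4) + 4 - k + 2 * (2 - a) * sqrt (a\<^sup>2 + k * a - k)"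
    using D2 by (simp add: power2_eq_square algebra_simps)
  then show ?thesis unfolding d_max_plus_def using nb by (simp add: power_divide add.commute)
qed

lemma dmax1_eq: "a_one_plus k < a \<Longrightarrow> d_max_plus a k = a\<^sup>2 / (4 * k)"
  unfolding d_max_plus_def by simp

lemma branch_iff:
  fixes k a :: real
  assumes k: "k > 0" and a1: "a \<le> 1"
  shows "a_one_plus k < a \<longleftrightarrow> sqrt k * (2 - a) < 2 * a"
proof -
  have y: "sqrt k > 0" using k by simp
  have "a_one_plus k < a \<longleftrightarrow> 2 * sqrt k / (2 + sqrt k) < a"
    unfolding a_one_plus_def using a1 by auto
  also have "\<dots> \<longleftrightarrow> 2 * sqrt k < a * (2 + sqrt k)"
    using y by (simp add: pos_divide_less_eq add_pos_pos)
  also have "\<dots> \<longleftrightarrow> sqrt k * (2 - a) < 2 * a" by (simp add: algebra_simps)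
  finally show ?thesis .
qed

lemma M_nonneg:
  fixes y a :: real
  assumes y: "y > 0" and a: "a \<ge> 0" and De: "a\<^sup>2 + y\<^sup>2*a - y\<^sup>2 \<ge> 0"
  shows "a * (y\<^sup>2 + 2*y + 4) \<ge> 4 * y"
proof (rule ccontr)
  define E where "E = y\<^sup>2 + 2*y + 4"
  have E: "E > 0" unfolding E_def using y by (simp add: add_pos_pos)
  assume "\<not> ?thesis"
  then have lt: "a * E < 4 * y" unfolding E_def by simp
  have aE: "a * E \<ge> 0" using a E by simp
  have s1: "(a*E)\<^sup>2 < (4*y)\<^sup>2" using lt aE by (intro power_strict_mono) auto
  have s2: "y\<^sup>2 * E * (a * E) < y\<^sup>2 * E * (4 * y)" using lt y E by (simp add: mult_strict_left_mono)
  have "E\<^sup>2 * (a\<^sup>2 + y\<^sup>2*a - y\<^sup>2) = (a*E)\<^sup>2 + y\<^sup>2 * E * (a * E) - y\<^sup>2 * E\<^sup>2"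
    by (simp add: power2_eq_square algebra_simps)
  also have "\<dots> < (4*y)\<^sup>2 + y\<^sup>2 * E * (4 * y) - y\<^sup>2 * E\<^sup>2" using s1 s2 by simp
  also have "\<dots> = - (y^6 + 4 * y^4)" unfolding E_def by (simp add: power2_eq_square algebra_simps eval_nat_numeral)
  also have "\<dots> \<le> 0"
  proof -
    have "0 \<le> y^6" "0 \<le> y^4" using y by simp_all
    then show ?thesis by linarith
  qed
  finally have "E\<^sup>2 * (a\<^sup>2 + y\<^sup>2*a - y\<^sup>2) < 0" .
  moreover have "E\<^sup>2 * (a\<^sup>2 + y\<^sup>2*a - y\<^sup>2) \<ge> 0" using De by simp
  ultimately show False by simp
qed

lemma r2_le_x0:
  fixes k a :: real
  assumes k: "k > 0" and a: "a_star_plus k \<le> a" "a \<le> 1"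
  shows "(2 - a + sqrt (a\<^sup>2 + k*a - k)) / (k+4) \<le> a / (2 * sqrt k)"
proof -
  define y where "y = sqrt k"
  define D where "D = sqrt (a\<^sup>2 + k*a - k)"
  have y: "y > 0" "y\<^sup>2 = k" unfolding y_def using k by auto
  have De: "a\<^sup>2 + k*a - k \<ge> 0" using delta_nonneg[OF k a(1)] .
  have D: "D \<ge> 0" "D\<^sup>2 = a\<^sup>2 + k*a - k" unfolding D_def using De by auto
  have a0: "a > 0" using astar_facts(1)[OF k] a by simp
  define M where "M = a * (k + 4) - 2 * y * (2 - a)"
  have M0: "M \<ge> 0"
    using M_nonneg[OF y(1), of a] a0 De y(2) unfolding M_def by (simp add: power2_eq_square algebra_simps)
  have yD: "(2*y*D)\<^sup>2 = 4*y\<^sup>2*(a\<^sup>2 + y\<^sup>2*a - y\<^sup>2)" using D(2) y(2) by (simp add: power_mult_distrib)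
  have "M\<^sup>2 - (2*y*D)\<^sup>2 = (y\<^sup>2+4) * (y*a + 2*a - 2*y)\<^sup>2"
    unfolding M_def yD y(2)[symmetric] by (simp add: power2_eq_square algebra_simps)
  moreover have "(y\<^sup>2+4) * (y*a + 2*a - 2*y)\<^sup>2 \<ge> 0" by (intro mult_nonneg_nonneg) auto
  ultimately have "(2*y*D)\<^sup>2 \<le> M\<^sup>2" by linarith
  then have "2*y*D \<le> M" using M0 by (simp add: power2_le_iff_abs_le)
  then have "2*y*(2 - a + D) \<le> a * (k+4)" unfolding M_def by (simp add: algebra_simps)
  then show ?thesis unfolding y_def[symmetric] D_def[symmetric] using y k
    by (simp add: divide_simps mult.commute mult.left_commute)
qed

lemma astar_not_branch:
  fixes k :: real assumes k: "k > 0"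
  shows "\<not> a_one_plus k < a_star_plus k"
proof
  define y where "y = sqrt k"
  define a where "a = a_star_plus k"
  have y: "y > 0" "y\<^sup>2 = k" unfolding y_def using k by auto
  have a: "a > 0" "a < 1" "a\<^sup>2 + k*a - k = 0" unfolding a_def using astar_facts[OF k] by auto
  assume "a_one_plus k < a_star_plus k"
  then have "y * (2 - a) < 2 * a" using branch_iff[OF k, of a] a unfolding a_def y_def by simp
  then have lt: "2 * y < a * (2 + y)" by (simp add: algebra_simps)
  have p: "(2*y)\<^sup>2 < (a*(2+y))\<^sup>2" using lt y by (intro power_strict_mono) auto
  have p2: "y\<^sup>2 * (2+y) * (2*y) < y\<^sup>2 * (2+y) * (a*(2+y))"
    using lt y(1) by (intro mult_strict_left_mono) auto
  have "(2+y)\<^sup>2 * (a\<^sup>2 + k*a - k) = (a*(2+y))\<^sup>2 + y\<^sup>2 * (2+y) * (a*(2+y)) - y\<^sup>2 * (2+y)\<^sup>2"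
    using y(2) by (simp add: power2_eq_square algebra_simps)
  also have "\<dots> > (2*y)\<^sup>2 + y\<^sup>2 * (2+y) * (2*y) - y\<^sup>2 * (2+y)\<^sup>2" using p p2 by simp
  also have "(2*y)\<^sup>2 + y\<^sup>2 * (2+y) * (2*y) - y\<^sup>2 * (2+y)\<^sup>2 = y^4" by (simp add: power2_eq_square algebra_simps eval_nat_numeral)
  finally have "(2+y)\<^sup>2 * (a\<^sup>2 + k*a - k) > y^4" .
  moreover have "0 < y^4" using y by simp
  ultimately have "(2+y)\<^sup>2 * (a\<^sup>2 + k*a - k) > 0" by linarith
  then show False using a(3) by simp
qed

lemma qq_w: "qq (1-w) (1-a) v = - v\<^sup>2 + (1-a+w) * v + w*(a-w)"
  by (simp add: qq_def algebra_simps)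

lemma sq_less_imp_less:
  fixes u v :: real
  assumes "u\<^sup>2 < v\<^sup>2" "v \<ge> 0" shows "u < v"
proof (rule ccontr)
  assume "\<not> u < v" then have "v \<le> u" by simp
  then have "v\<^sup>2 \<le> u\<^sup>2" using assms(2) by (intro power_mono) auto
  then show False using assms(1) by simp
qed

lemma H_nonneg:
  fixes a t :: real
  assumes a: "1/2 < a" "a < 1" and t: "0 \<le> t" "t \<le> (2*a-1)/3"
  shows "4*a\<^sup>2*(1-a) + t*(11*a\<^sup>2 - 4*a - 4) - 8*a*t\<^sup>2 \<ge> 0"
proof -
  define T where "T = (2*a-1)/3"
  have T: "T > 0" unfolding T_def using a by simp
  have id0: "3*(2*a-1) * (4*a\<^sup>2*(1-a) + t*(11*a\<^sup>2 - 4*a - 4) - 8*a*t\<^sup>2)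
      = 3*((2*a-1) - 3*t) * (4*a\<^sup>2*(1-a)) + t * ((2-a)\<^sup>2*(3-2*a)) + 8*a*(2*a-1)*(t*((2*a-1)-3*t))"
    by (simp add: power2_eq_square algebra_simps)
  have id: "T * (4*a\<^sup>2*(1-a) + t*(11*a\<^sup>2 - 4*a - 4) - 8*a*t\<^sup>2)
      = (T - t) * (4*a\<^sup>2*(1-a)) + t * ((2-a)\<^sup>2*(3-2*a)/9) + 8*a*T*(t*(T-t))"
    unfolding T_def using id0 by (simp add: field_simps)
  have "(T - t) * (4*a\<^sup>2*(1-a)) \<ge> 0" using t a unfolding T_def[symmetric] by (intro mult_nonneg_nonneg) auto
  moreover have "t * ((2-a)\<^sup>2*(3-2*a)/9) \<ge> 0" using t a by (intro mult_nonneg_nonneg) auto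
  moreover have "8*a*T*(t*(T-t)) \<ge> 0" using t a T unfolding T_def[symmetric] by (intro mult_nonneg_nonneg) auto
  ultimately have "T * (4*a\<^sup>2*(1-a) + t*(11*a\<^sup>2 - 4*a - 4) - 8*a*t\<^sup>2) \<ge> 0" using id by linarith
  then show ?thesis using T by (simp add: zero_le_mult_iff)
qed

lemma branch_from:
  fixes k a :: real
  assumes k: "k > 0" and a: "0 < a" "a < 1" and lt: "k * (2-a)\<^sup>2 < 4 * a\<^sup>2"
  shows "a_one_plus k < a" "a\<^sup>2 + k*a - k > 0"
proof -
  have "(sqrt k * (2-a))\<^sup>2 < (2*a)\<^sup>2" using lt k by (simp add: power_mult_distrib)
  then have "sqrt k * (2-a) < 2*a" by (rule sq_less_imp_less) (use a in simp)
  then show "a_one_plus k < a" using branch_iff[OF k, of a] a by simp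
  have "(2-a)\<^sup>2 - 4*(1-a) = a\<^sup>2" by (simp add: power2_eq_square algebra_simps)
  then have "4*(1-a) \<le> (2-a)\<^sup>2" by (metis diff_ge_0_iff_ge zero_le_power2)
  then have "k*(4*(1-a)) \<le> k*(2-a)\<^sup>2" using k by (intro mult_left_mono) auto
  then have "4*(k*(1-a)) < 4*a\<^sup>2" using lt by linarith
  then show "a\<^sup>2 + k*a - k > 0" by (simp add: algebra_simps)
qed

lemma core_nec_raw:
  fixes k a w d :: real
  assumes k: "k>0" and a: "0<a" "a<1" and w: "0<w" "w<a" and d: "d>0"
    and U: "k*d < w*(a-w)"
    and Q: "\<forall>v\<in>{0..1-w}. qq (1-w) (1-a) v < (1+k)*d"
  shows "a\<^sup>2 + k*a - k > 0 \<and> (2 - a - sqrt (a\<^sup>2 + k*a - k)) / (k+4) < sqrt d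
         \<and> (\<not> a_one_plus k < a \<longrightarrow> sqrt d < (2 - a + sqrt (a\<^sup>2 + k*a - k)) / (k+4))"
proof -
  define x where "x = sqrt d"
  have x: "x > 0" "x\<^sup>2 = d" unfolding x_def using d by auto
  define s where "s = 1 - a + w"
  have s: "s > 0" unfolding s_def using a w by simp
  have Pmax: "w*(a-w) \<le> a\<^sup>2/4"
  proof -
    have "0 \<le> (a - 2*w)\<^sup>2" by simp
    then show ?thesis by (simp add: power2_eq_square algebra_simps)
  qed
  have kd: "(1+k)*d = d + k*d" by (simp add: algebra_simps)
  have k4: "k + 4 > 0" using k by simp
  have r1_le: "(2 - a - sqrt (a\<^sup>2 + k*a - k)) / (k+4) \<le> (2-a)/4" if De: "a\<^sup>2 + k*a - k \<ge> 0"
  proof -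
    have "sqrt (a\<^sup>2 + k*a - k) \<ge> 0" using De by simp
    then have "(2 - a - sqrt (a\<^sup>2 + k*a - k)) / (k+4) \<le> (2-a)/(k+4)"
      using k4 by (intro divide_right_mono) auto
    also have "\<dots> \<le> (2-a)/4" using k a by (intro divide_left_mono) auto
    finally show ?thesis .
  qed
  show ?thesis
  proof (cases "s \<le> 2*(1-w)")
    case True
    have mem: "s/2 \<in> {0..1-w}" using True s by simp
    have e1: "qq (1-w) (1-a) (s/2) = w*(a-w) + s\<^sup>2/4"
      unfolding qq_w s_def by (simp add: power2_eq_square field_simps)
    have "w*(a-w) + s\<^sup>2/4 < (1+k)*d" using Q mem e1 by fastforce
    then have "s\<^sup>2 < 4*d" using U kd by linarith
    then have "s\<^sup>2 < (2*x)\<^sup>2" using x(2) by (simp add: power_mult_distrib)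
    then have sx: "s < 2*x" by (rule sq_less_imp_less) (use x in simp)
    show ?thesis
    proof (cases "4*x \<le> 2-a")
      case True
      define z where "z = 2*x - (1-a)"
      have wz: "w < z" using sx unfolding z_def s_def by simp
      have za: "z \<le> a/2" using True unfolding z_def by simp
      have ez: "z*(a-z) - w*(a-w) = (z-w)*(a-z-w)" by (simp add: algebra_simps)
      have "(z-w)*(a-z-w) > 0" using wz za w by (intro mult_pos_pos) auto
      moreover have "k*x\<^sup>2 = k*d" using x(2) by simp
      ultimately have "k*x\<^sup>2 < z*(a-z)" using U ez by linarith
      moreover have "z*(a-z) = k*x\<^sup>2 - ((k+4)*x\<^sup>2 - 2*(2-a)*x + (1-a))" unfolding z_def
        by (simp add: power2_eq_square algebra_simps)
      ultimately have q: "(k+4)*x\<^sup>2 - 2*(2-a)*x + (1-a) < 0" by linarith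
      show ?thesis using quad_neg_imp[OF k q] unfolding x_def by simp
    next
      case False
      have "k*x\<^sup>2 < a\<^sup>2/4" using U Pmax x(2) by simp
      moreover have "k*((2-a)/4)\<^sup>2 < k*x\<^sup>2" using False k a
        by (intro mult_strict_left_mono power_strict_mono) auto
      moreover have "k*((2-a)/4)\<^sup>2 = k*(2-a)\<^sup>2/16" by (simp add: power_divide)
      ultimately have "k*(2-a)\<^sup>2 < 4*a\<^sup>2" by linarith
      note bf = branch_from[OF k a this]
      have "(2 - a - sqrt (a\<^sup>2 + k*a - k)) / (k+4) \<le> (2-a)/4"
        using r1_le bf(2) by simp
      moreover have "(2-a)/4 < x" using False by simp
      ultimately have "(2 - a - sqrt (a\<^sup>2 + k*a - k)) / (k+4) < x"
        by (rule le_less_trans)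
      then show ?thesis using bf unfolding x_def by simp
    qed
  next
    case False
    have mem: "1-w \<in> {0..1-w}" using w a by simp
    have e1: "qq (1-w) (1-a) (1-w) = w*(a-w) + (1-w)*(2*w-a)"
      unfolding qq_w by (simp add: power2_eq_square algebra_simps)
    have "w*(a-w) + (1-w)*(2*w-a) < (1+k)*d" using Q mem e1 by fastforce
    then have Rd: "(1-w)*(2*w-a) < d" using U kd by linarith
    have w3: "3*w > 1 + a" using False unfolding s_def by simp
    have a2: "a > 1/2" using w3 w by simp
    have R0: "(1-w)*(2*w-a) > 0" using w3 w a by (intro mult_pos_pos) auto
    define t where "t = a - w"
    have t: "0 \<le> t" "t \<le> (2*a-1)/3" unfolding t_def using w w3 by auto
    have H: "4*a\<^sup>2*(1-a) + t*(11*a\<^sup>2 - 4*a - 4) - 8*a*t\<^sup>2 \<ge> 0"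
      using H_nonneg[OF a2 a(2) t] .
    have "(a-t)*t \<le> a*t" using t by (simp add: algebra_simps)
    then have m1: "(2-a)\<^sup>2*((a-t)*t) \<le> (2-a)\<^sup>2*(a*t)" by (intro mult_left_mono) auto
    have m2: "4*a\<^sup>2*((1-a)+t)*(a-2*t) - (2-a)\<^sup>2*(a*t)
        = a * (4*a\<^sup>2*(1-a) + t*(11*a\<^sup>2 - 4*a - 4) - 8*a*t\<^sup>2)"
      by (simp add: power2_eq_square algebra_simps)
    have m3: "a * (4*a\<^sup>2*(1-a) + t*(11*a\<^sup>2 - 4*a - 4) - 8*a*t\<^sup>2) \<ge> 0"
      using H a by simp
    have m4: "(2-a)\<^sup>2*((a-t)*t) = (2-a)\<^sup>2*(w*(a-w))" unfolding t_def by (simp add: algebra_simps)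
    have m5: "4*a\<^sup>2*((1-a)+t)*(a-2*t) = 4*a\<^sup>2*((1-w)*(2*w-a))" unfolding t_def by (simp add: algebra_simps)
    have key: "(2-a)\<^sup>2*(w*(a-w)) \<le> 4*a\<^sup>2*((1-w)*(2*w-a))"
      using m1 m2 m3 m4 m5 by linarith
    have "k*((1-w)*(2*w-a)) < k*d" using Rd k by simp
    then have "k*((1-w)*(2*w-a)) < w*(a-w)" using U by linarith
    then have "(2-a)\<^sup>2*(k*((1-w)*(2*w-a))) < (2-a)\<^sup>2*(w*(a-w))" using a
      by (intro mult_strict_left_mono) auto
    then have "(k*(2-a)\<^sup>2)*((1-w)*(2*w-a)) < (4*a\<^sup>2)*((1-w)*(2*w-a))" using key
      by (simp add: algebra_simps)
    then have "k*(2-a)\<^sup>2 < 4*a\<^sup>2" using R0 by (simp add: mult_less_cancel_right)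
    note bf = branch_from[OF k a this]
    define D where "D = sqrt (a\<^sup>2 + k*a - k)"
    have De: "a\<^sup>2 + k*a - k \<ge> 0" using bf by simp
    note Df = D_facts[OF k De less_imp_le[OF a(2)], folded D_def]
    define r1 where "r1 = (2 - a - D)/(k+4)"
    define r2 where "r2 = (2 - a + D)/(k+4)"
    have D0: "D \<ge> 0" unfolding D_def using De by simp
    have r1: "0 \<le> r1" "r1 \<le> r2" unfolding r1_def r2_def using Df(1) D0 k4
      by (auto intro: divide_right_mono divide_nonneg_pos)
    have "r1 * r2 = ((2-a-D)*(2-a+D))/((k+4)*(k+4))" unfolding r1_def r2_def by simp
    also have "\<dots> = ((k+4)*(1-a))/((k+4)*(k+4))" using Df(3) by simp
    also have "\<dots> = (1-a)/(k+4)" using k4 by simp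
    finally have "r1 * r2 = (1-a)/(k+4)" .
    moreover have "r1 * r1 \<le> r1 * r2" using r1 by (intro mult_left_mono) auto
    moreover have "(1-a)/(k+4) \<le> (1-a)/4" using a k by (intro divide_left_mono) auto
    moreover have "(1-a)/3 < (1-w)*(2*w-a)"
    proof -
      have "(1-a)*(1/3) < (1-w)*(2*w-a)" using a w w3
        by (intro mult_strict_mono) auto
      then show ?thesis by simp
    qed
    moreover have "(1-a)/4 \<le> (1-a)/3" using a by simp
    ultimately have "r1 * r1 < x\<^sup>2" using Rd x(2) by linarith
    then have "r1\<^sup>2 < x\<^sup>2" by (simp add: power2_eq_square)
    then have "r1 < x" by (rule sq_less_imp_less) (use x in simp)
    then show ?thesis using bf unfolding r1_def D_def x_def by simp
  qed
qed

lemma sixteen_neg: "16 * (X::real) < 0 \<Longrightarrow> X < 0" by simp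

lemma core_suf:
  fixes k a d :: real
  assumes k: "k>0" and a: "0<a" "a<1" and d: "d>0" and as: "a_star_plus k < a"
    and lo: "d_min_plus a k < d" and hi: "d < d_max_plus a k"
  shows "\<exists>w. 0<w \<and> w<a \<and> k*d < w*(a-w) \<and> w*(a-w) + (1-a+w)\<^sup>2/4 < (1+k)*d"
proof -
  have Dp: "a\<^sup>2 + k*a - k > 0" using delta_pos_iff[OF k a(1)] as by simp
  then have De: "a\<^sup>2 + k*a - k \<ge> 0" by simp
  define D where "D = sqrt (a\<^sup>2 + k*a - k)"
  note Df = D_facts[OF k De less_imp_le[OF a(2)], folded D_def]
  have D0: "D \<ge> 0" unfolding D_def using De by simp
  have k4: "k + 4 > 0" using k by simp
  define r1 where "r1 = (2 - a - D)/(k+4)"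
  define r2 where "r2 = (2 - a + D)/(k+4)"
  have r1: "0 \<le> r1" "r1 \<le> r2" unfolding r1_def r2_def using Df(1) D0 k4
    by (auto intro: divide_right_mono divide_nonneg_pos)
  define x where "x = sqrt d"
  have x: "x > 0" "x\<^sup>2 = d" unfolding x_def using d by auto
  have "d_min_plus a k = r1\<^sup>2" unfolding r1_def D_def using dmin_eq[OF k De] .
  then have "r1\<^sup>2 < x\<^sup>2" using lo x(2) by simp
  then have xr1: "r1 < x" by (rule sq_less_imp_less) (use x in simp)
  have sk: "sqrt k > 0" "(sqrt k)\<^sup>2 = k" using k by auto
  have d4: "d < a\<^sup>2/(4*k)"
  proof (cases "a_one_plus k < a")
    case True then show ?thesis using hi dmax1_eq by simp
  next
    case False
    have "d_max_plus a k = r2\<^sup>2" unfolding r2_def D_def using dmax2_eq[OF k De False] .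
    moreover have "r2 \<le> a / (2 * sqrt k)" unfolding r2_def D_def
      using r2_le_x0[OF k less_imp_le[OF as] less_imp_le[OF a(2)]] .
    then have "r2\<^sup>2 \<le> (a / (2 * sqrt k))\<^sup>2" using r1 by (intro power_mono) auto
    moreover have "(a / (2 * sqrt k))\<^sup>2 = a\<^sup>2/(4*k)" using sk by (simp add: power_divide power_mult_distrib)
    ultimately show ?thesis using hi by simp
  qed
  have kd4: "4*(k*d) < a\<^sup>2" using d4 k by (simp add: less_divide_eq mult.commute mult.left_commute)
  have hC: "2 - a < 4*x \<or> (k+4)*x\<^sup>2 - 2*(2-a)*x + (1-a) < 0"
  proof (cases "x < r2")
    case True
    have "(k+4)*x\<^sup>2 - 2*(2-a)*x + (1-a) < 0"
      using quad_neg_of[OF k De] xr1 True unfolding r1_def r2_def D_def by simp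
    then show ?thesis by simp
  next
    case False
    have br: "a_one_plus k < a"
    proof (rule ccontr)
      assume nb: "\<not> a_one_plus k < a"
      have "d_max_plus a k = r2\<^sup>2" unfolding r2_def D_def using dmax2_eq[OF k De nb] .
      then have "x\<^sup>2 < r2\<^sup>2" using hi x(2) by simp
      then have "x < r2" by (rule sq_less_imp_less) (use r1 in simp)
      then show False using False by simp
    qed
    then have "sqrt k * (2-a) < 2*a" using branch_iff[OF k, of a] a by simp
    then have "(sqrt k * (2-a))\<^sup>2 < (2*a)\<^sup>2" using a sk by (intro power_strict_mono) auto
    then have lt: "k*(2-a)\<^sup>2 < 4*a\<^sup>2" using sk by (simp add: power_mult_distrib)
    have e16: "16 * ((k+4)*((2-a)/4)\<^sup>2 - 2*(2-a)*((2-a)/4) + (1-a)) = k*(2-a)\<^sup>2 - 4*a\<^sup>2"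
      by (simp add: power2_eq_square field_simps)
    have "16 * ((k+4)*((2-a)/4)\<^sup>2 - 2*(2-a)*((2-a)/4) + (1-a)) < 0" unfolding e16 using lt by linarith
    then have "(k+4)*((2-a)/4)\<^sup>2 - 2*(2-a)*((2-a)/4) + (1-a) < 0" by (rule sixteen_neg)
    from quad_neg_imp(3)[OF k this] have "(2-a)/4 < r2" unfolding r2_def D_def .
    then show ?thesis using False by simp
  qed
  define E where "E = sqrt (a\<^sup>2 - 4*(k*d))"
  have E: "E > 0" "E\<^sup>2 = a\<^sup>2 - 4*(k*d)" unfolding E_def using kd4 by auto
  have "E\<^sup>2 < a\<^sup>2" using E(2) k d by simp
  then have Ea: "E < a" by (rule sq_less_imp_less) (use a in simp)
  define wu where "wu = (a - E)/2"
  have wu0: "wu > 0" unfolding wu_def using Ea by simp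
  have Pwu: "wu*(a-wu) = k*d"
  proof -
    have "wu*(a-wu) = (a\<^sup>2 - E\<^sup>2)/4" unfolding wu_def by (simp add: power2_eq_square field_simps)
    then show ?thesis using E(2) by simp
  qed
  define su where "su = 1 - a + wu"
  have su0: "su > 0" unfolding su_def using a wu0 by simp
  have su_iff: "su < 2*x \<longleftrightarrow> 2 - a - 4*x < E" unfolding su_def wu_def by (simp add: field_simps)
  have su2x: "su < 2*x"
  proof (cases "2 - a < 4*x")
    case True then show ?thesis using su_iff E by simp
  next
    case False
    then have q: "(k+4)*x\<^sup>2 - 2*(2-a)*x + (1-a) < 0" using hC by simp
    define Qx where "Qx = (k+4)*x\<^sup>2 - 2*(2-a)*x + (1-a)"
    have q': "Qx < 0" using q unfolding Qx_def .
    have "(2-a-4*x)\<^sup>2 - E\<^sup>2 = 4*Qx" unfolding Qx_def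
      using E(2) x(2)[symmetric] by (simp add: power2_eq_square algebra_simps)
    then have "(2-a-4*x)\<^sup>2 < E\<^sup>2" using q' by linarith
    then have "2 - a - 4*x < E" by (rule sq_less_imp_less) (use E in simp)
    then show ?thesis using su_iff by simp
  qed
  have "su\<^sup>2 < (2*x)\<^sup>2" using su2x su0 by (intro power_strict_mono) auto
  then have g0: "x\<^sup>2 - su\<^sup>2/4 > 0" by (simp add: power_mult_distrib)
  define g where "g = x\<^sup>2 - su\<^sup>2/4"
  define c where "c = a + su/2 + 1"
  have c0: "c > 0" unfolding c_def using a su0 by simp
  define \<epsilon> where "\<epsilon> = min (E/2) (g/c)"
  have "g > 0" unfolding g_def using g0 .
  then have e1: "\<epsilon> > 0" unfolding \<epsilon>_def using E c0 by simp
  have e2: "\<epsilon> \<le> E/2" unfolding \<epsilon>_def by (rule min.cobounded1)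
  have e3: "\<epsilon> \<le> g/c" unfolding \<epsilon>_def by (rule min.cobounded2)
  note eps = e1 e2 e3
  have epsc: "\<epsilon> * c \<le> g" using eps(3) c0 by (simp add: le_divide_eq)
  define w where "w = wu + \<epsilon>"
  have Pw: "w*(a-w) = k*d + \<epsilon>*(E - \<epsilon>)"
  proof -
    have "w*(a-w) = wu*(a-wu) + \<epsilon>*(a - 2*wu) - \<epsilon>\<^sup>2" unfolding w_def by (simp add: power2_eq_square algebra_simps)
    moreover have "a - 2*wu = E" unfolding wu_def by (simp add: field_simps)
    ultimately show ?thesis using Pwu by (simp add: power2_eq_square algebra_simps)
  qed
  have "\<epsilon>*(E - \<epsilon>) > 0" using eps E by (intro mult_pos_pos) auto
  then have c1: "k*d < w*(a-w)" using Pw by simp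
  have sw: "1 - a + w = su + \<epsilon>" unfolding w_def su_def by simp
  have "w*(a-w) + (1-a+w)\<^sup>2/4 = k*d + su\<^sup>2/4 + \<epsilon>*(E + su/2) - 3/4*\<epsilon>\<^sup>2"
    unfolding sw Pw by (simp add: power2_eq_square field_simps)
  moreover have "\<epsilon>*(E + su/2) \<le> \<epsilon>*(a + su/2)" using eps Ea by (intro mult_left_mono) auto
  moreover have "\<epsilon>*(a + su/2) < \<epsilon> * c" unfolding c_def using eps by (simp add: algebra_simps)
  moreover have "3/4*\<epsilon>\<^sup>2 \<ge> 0" by simp
  moreover have "(1+k)*d = k*d + x\<^sup>2" using x(2) by (simp add: algebra_simps)
  ultimately have c2: "w*(a-w) + (1-a+w)\<^sup>2/4 < (1+k)*d" using epsc unfolding g_def by linarith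
  have "w > 0" unfolding w_def using wu0 eps by simp
  moreover have "w < a" unfolding w_def wu_def using eps Ea by (simp add: field_simps)
  ultimately show ?thesis using c1 c2 by blast
qed

lemma gcub_div: "A \<noteq> 0 \<Longrightarrow> gcub A b / A = (1 - A) * (A - b)"
  by (simp add: gcub_def)

lemma Dplus_char:
  fixes k :: real assumes k: "k > 0"
  shows "D_plus k = {(a, d). (a, d) \<in> H_strip \<and> a > a_star_plus k
                              \<and> d_min_plus a k < d \<and> d < d_max_plus a k}"
proof (intro set_eqI iffI)
  fix p assume p: "p \<in> D_plus k"
  obtain a d where pd: "p = (a, d)" by (cases p)
  have H: "(a,d) \<in> H_strip" and Dm: "(1 - a, d * k) \<in> D_minus gcub (1/k)"
    using p unfolding pd D_plus_def reflect_gcub by auto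
  have a: "0 < a" "a < 1" and d: "d > 0" using H unfolding H_strip_def by auto
  obtain A where A: "A \<in> {1-a<..<1}" and dd: "d_diamond gcub (1/k) A (1-a) < d*k"
      and du: "d*k < gcub A (1-a) / A"
    using Dm unfolding D_minus_def by auto
  define w where "w = 1 - A"
  have Aw: "A = 1 - w" unfolding w_def by simp
  have w: "0 < w" "w < a" using A unfolding w_def by auto
  have "\<forall>v\<in>{0..A}. qq A (1-a) v < (1/k + 1) * (d*k)"
    using diamond_nec[of "1-a" A "1/k" "d*k"] A a k dd by auto
  moreover have "(1/k + 1) * (d*k) = (1+k)*d" using k by (simp add: field_simps)
  ultimately have Q: "\<forall>v\<in>{0..1-w}. qq (1-w) (1-a) v < (1+k)*d" unfolding Aw by simp
  have "gcub A (1-a) / A = w*(a-w)" unfolding Aw using w a by (subst gcub_div) (auto simp: algebra_simps)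
  then have U: "k*d < w*(a-w)" using du by (simp add: mult.commute)
  have cr: "a\<^sup>2 + k*a - k > 0 \<and> (2 - a - sqrt (a\<^sup>2 + k*a - k)) / (k+4) < sqrt d
         \<and> (\<not> a_one_plus k < a \<longrightarrow> sqrt d < (2 - a + sqrt (a\<^sup>2 + k*a - k)) / (k+4))"
    using core_nec_raw[OF k a w d U Q] .
  have as: "a_star_plus k < a" using cr delta_pos_iff[OF k a(1)] by simp
  have De: "a\<^sup>2 + k*a - k \<ge> 0" using cr by simp
  have D0: "sqrt (a\<^sup>2 + k*a - k) \<le> 2 - a" using D_facts(1)[OF k De] a by simp
  have k4: "k + 4 > 0" using k by simp
  have r10: "0 \<le> (2 - a - sqrt (a\<^sup>2 + k*a - k)) / (k+4)" using D0 k4 by simp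
  have sd: "sqrt d \<ge> 0" "(sqrt d)\<^sup>2 = d" using d by auto
  have "((2 - a - sqrt (a\<^sup>2 + k*a - k)) / (k+4))\<^sup>2 < (sqrt d)\<^sup>2"
    using cr r10 by (intro power_strict_mono) auto
  then have lo: "d_min_plus a k < d" using dmin_eq[OF k De] sd by simp
  have hi: "d < d_max_plus a k"
  proof (cases "a_one_plus k < a")
    case True
    have "w*(a-w) \<le> a\<^sup>2/4"
    proof -
      have "0 \<le> (a - 2*w)\<^sup>2" by simp
      then show ?thesis by (simp add: power2_eq_square algebra_simps)
    qed
    then have "k*d < a\<^sup>2/4" using U by simp
    then have "d < a\<^sup>2/(4*k)" using k by (simp add: less_divide_eq mult.commute mult.left_commute)
    then show ?thesis using dmax1_eq[OF True] by simp
  next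
    case False
    then have "sqrt d < (2 - a + sqrt (a\<^sup>2 + k*a - k)) / (k+4)" using cr by simp
    then have "(sqrt d)\<^sup>2 < ((2 - a + sqrt (a\<^sup>2 + k*a - k)) / (k+4))\<^sup>2"
      using sd by (intro power_strict_mono) auto
    then show ?thesis using dmax2_eq[OF k De False] sd by simp
  qed
  show "p \<in> {(a, d). (a, d) \<in> H_strip \<and> a > a_star_plus k
                              \<and> d_min_plus a k < d \<and> d < d_max_plus a k}"
    unfolding pd using H as lo hi by simp
next
  fix p assume p: "p \<in> {(a, d). (a, d) \<in> H_strip \<and> a > a_star_plus k
                              \<and> d_min_plus a k < d \<and> d < d_max_plus a k}"
  obtain a d where pd: "p = (a, d)" by (cases p)
  have H: "(a,d) \<in> H_strip" and as: "a > a_star_plus k" and lo: "d_min_plus a k < d"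
    and hi: "d < d_max_plus a k" using p unfolding pd by auto
  have a: "0 < a" "a < 1" and d: "d > 0" using H unfolding H_strip_def by auto
  obtain w where w: "0<w" "w<a" and U: "k*d < w*(a-w)"
    and Q: "w*(a-w) + (1-a+w)\<^sup>2/4 < (1+k)*d"
    using core_suf[OF k a d as lo hi] by blast
  define A where "A = 1 - w"
  have A: "1 - a < A" "A < 1" unfolding A_def using w by auto
  have "(1 - A) * (A - (1-a)) + (1 + (1-a) - A)\<^sup>2 / 4 < (1/k + 1) * (d*k)"
  proof -
    have "(1/k + 1) * (d*k) = (1+k)*d" using k by (simp add: field_simps)
    moreover have "(1 - A) * (A - (1-a)) + (1 + (1-a) - A)\<^sup>2 / 4 = w*(a-w) + (1-a+w)\<^sup>2/4"
      unfolding A_def by (simp add: algebra_simps)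
    ultimately show ?thesis using Q by linarith
  qed
  then have dd: "d_diamond gcub (1/k) A (1-a) < d*k"
    using diamond_suff[of "1-a" A "1/k" "d*k"] A k by simp
  have "gcub A (1-a) / A = w*(a-w)" unfolding A_def using w a by (subst gcub_div) (auto simp: algebra_simps)
  then have du: "d*k < gcub A (1-a) / A" using U by (simp add: mult.commute)
  have "(1 - a, d * k) \<in> H_strip" unfolding H_strip_def using a d k by simp
  then have "(1 - a, d * k) \<in> D_minus gcub (1/k)" unfolding D_minus_def using A dd du by auto
  then show "p \<in> D_plus k" unfolding pd D_plus_def reflect_gcub using H by simp
qed

lemma boundary_eq:
  fixes k a :: real
  assumes k: "k > 0" and a: "a = 2 * sqrt k / (2 + sqrt k)"
  shows "a\<^sup>2 / (4 * k) = (2 * a\<^sup>2 + a * (k - 4) + 4 - k + 2 * (2 - a) * sqrt (a\<^sup>2 + k * a - k)) / (4 + k)\<^sup>2"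
proof -
  define y where "y = sqrt k"
  have y: "y > 0" "k = y\<^sup>2" unfolding y_def using k by auto
  have y2: "2 + y > 0" using y by simp
  then have y2n: "2 + y \<noteq> 0" by simp
  have a': "a = 2*y/(2+y)" using a unfolding y_def .
  have ha: "a*(2+y) = 2*y" unfolding a' using y2n by simp
  have "(2+y)\<^sup>2*(a\<^sup>2 + k*a - k) = (a*(2+y))\<^sup>2 + y\<^sup>2*(2+y)*(a*(2+y)) - y\<^sup>2*(2+y)\<^sup>2"
    unfolding y(2) by (simp add: power2_eq_square algebra_simps)
  also have "\<dots> = y^4" unfolding ha by (simp add: power2_eq_square algebra_simps eval_nat_numeral)
  finally have "(2+y)\<^sup>2*(a\<^sup>2 + k*a - k) = y^4" .
  then have "a\<^sup>2 + k*a - k = y^4/(2+y)\<^sup>2" using y2n by (simp add: eq_divide_eq mult.commute)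
  also have "\<dots> = (y\<^sup>2/(2+y))\<^sup>2" by (simp add: power_divide eval_nat_numeral)
  finally have De: "a\<^sup>2 + k*a - k = (y\<^sup>2/(2+y))\<^sup>2" .
  define D where "D = sqrt (a\<^sup>2 + k * a - k)"
  have D: "D = y\<^sup>2/(2+y)" unfolding D_def De using y2 by simp
  have D2: "D\<^sup>2 = a\<^sup>2 + k*a - k" unfolding De D ..
  have num: "2 * a\<^sup>2 + a * (k - 4) + 4 - k + 2 * (2 - a) * D = (2 - a + D)\<^sup>2"
    using D2 by (simp add: power2_eq_square algebra_simps)
  have Dy: "D*(2+y) = y\<^sup>2" unfolding D using y2n by simp
  have "(2 - a + D)*(2+y) = 4 + k" unfolding y(2)
    using ha Dy by (simp add: algebra_simps)
  then have s: "2 - a + D = (4 + k)/(2+y)" using y2n by (simp add: eq_divide_eq)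
  have k4: "4 + k \<noteq> 0" using k by simp
  have rhs: "(2 * a\<^sup>2 + a * (k - 4) + 4 - k + 2 * (2 - a) * D) / (4 + k)\<^sup>2 = 1/(2+y)\<^sup>2"
    unfolding num s using k4 y2n by (simp add: power_divide)
  have "a\<^sup>2 / (4 * k) = ((2*y)\<^sup>2/(2+y)\<^sup>2)/(4*y\<^sup>2)" unfolding a' y(2) by (simp add: power_divide)
  also have "\<dots> = 1/(2+y)\<^sup>2" using y y2n by (simp add: power_mult_distrib divide_simps)
  finally have lhs: "a\<^sup>2 / (4 * k) = 1/(2+y)\<^sup>2" .
  show ?thesis using lhs rhs unfolding D_def by simp
qed

lemma dmin_cont:
  "continuous_on {(a, k'). 0 < k' \<and> a_star_plus k' \<le> a \<and> a \<le> 1} (\<lambda>(a, k'). d_min_plus a k')"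
proof -
  have "continuous_on {(a, k'). 0 < k' \<and> a_star_plus k' \<le> a \<and> a \<le> 1} (\<lambda>p. d_min_plus (fst p) (snd p))"
    unfolding d_min_plus_def
    by (intro continuous_intros) (auto simp: add_pos_pos)
  then show ?thesis by (simp add: case_prod_beta')
qed

lemma dmax_cont:
  "continuous_on {(a, k'). 0 < k' \<and> a_star_plus k' \<le> a \<and> a \<le> 1} (\<lambda>(a, k'). d_max_plus a k')"
proof -
  let ?S = "{(a, k'). 0 < k' \<and> a_star_plus k' \<le> a \<and> a \<le> 1} :: (real \<times> real) set"
  let ?c = "\<lambda>k::real. 2 * sqrt k / (2 + sqrt k)"
  let ?h = "\<lambda>p::real\<times>real. fst p - ?c (snd p)"
  let ?g = "\<lambda>p::real\<times>real. (2 * (fst p)\<^sup>2 + fst p * (snd p - 4) + 4 - snd p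
              + 2 * (2 - fst p) * sqrt ((fst p)\<^sup>2 + snd p * fst p - snd p)) / (4 + snd p)\<^sup>2"
  let ?f = "\<lambda>p::real\<times>real. (fst p)\<^sup>2 / (4 * snd p)"
  have pos: "\<And>p. p \<in> ?S \<Longrightarrow> snd p > 0" by auto
  have cont: "continuous_on ?S (\<lambda>p. if ?h p \<le> 0 then ?g p else ?f p)"
  proof (rule continuous_on_cases_le)
    show "continuous_on {p \<in> ?S. ?h p \<le> 0} ?g"
      by (intro continuous_intros) (auto simp: add_pos_pos)
    show "continuous_on {p \<in> ?S. 0 \<le> ?h p} ?f"
      by (intro continuous_intros) auto
    show "continuous_on ?S ?h"
    proof (intro continuous_intros)
      show "\<forall>x\<in>?S. 2 + sqrt (snd x) \<noteq> 0"
      proof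
        fix x assume "x \<in> ?S"
        then have "sqrt (snd x) > 0" by auto
        then show "2 + sqrt (snd x) \<noteq> 0" by linarith
      qed
    qed
    fix p assume p: "p \<in> ?S" "?h p = 0"
    then show "?g p = ?f p" using boundary_eq[of "snd p" "fst p"] pos[OF p(1)] by simp
  qed
  have meq: "d_max_plus (fst p) (snd p) = (if ?h p \<le> 0 then ?g p else ?f p)" if "p \<in> ?S" for p
  proof -
    have k: "snd p > 0" and a1: "fst p \<le> 1" using that by auto
    have "a_one_plus (snd p) < fst p \<longleftrightarrow> ?c (snd p) < fst p"
      unfolding a_one_plus_def using a1 by auto
    then show ?thesis unfolding d_max_plus_def by auto
  qed
  have "continuous_on ?S (\<lambda>p. d_max_plus (fst p) (snd p))"
    using cont by (rule continuous_on_eq) (simp add: meq)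
  then show ?thesis by (simp add: case_prod_beta')
qed

lemma part_ineq:
  fixes k a :: real
  assumes k: "k > 0" and a: "a \<in> {a_star_plus k..1}"
  shows "0 \<le> d_min_plus a k \<and> d_min_plus a k \<le> d_max_plus a k \<and> d_max_plus a k \<le> d_plus a k"
proof -
  have as: "a_star_plus k \<le> a" and a1: "a \<le> 1" using a by auto
  have a0: "a > 0" using astar_facts(1)[OF k] as by simp
  have De: "a\<^sup>2 + k*a - k \<ge> 0" using delta_nonneg[OF k as] .
  define D where "D = sqrt (a\<^sup>2 + k*a - k)"
  note Df = D_facts[OF k De a1, folded D_def]
  have D0: "D \<ge> 0" unfolding D_def using De by simp
  have k4: "k + 4 > 0" using k by simp
  define r1 where "r1 = (2 - a - D)/(k+4)"
  define r2 where "r2 = (2 - a + D)/(k+4)"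
  have r1: "0 \<le> r1" "r1 \<le> r2" unfolding r1_def r2_def using Df(1) D0 k4
    by (auto intro: divide_right_mono divide_nonneg_pos)
  have sk: "sqrt k > 0" "(sqrt k)\<^sup>2 = k" using k by auto
  have r2x: "r2 \<le> a / (2 * sqrt k)" unfolding r2_def D_def using r2_le_x0[OF k as a1] .
  have x0: "(a / (2 * sqrt k))\<^sup>2 = a\<^sup>2/(4*k)" using sk by (simp add: power_divide power_mult_distrib)
  have r2sq: "r2\<^sup>2 \<le> a\<^sup>2/(4*k)" using r2x r1 x0 by (metis order_trans power_mono)
  have r1sq: "r1\<^sup>2 \<le> r2\<^sup>2" using r1 by (intro power_mono) auto
  have dmin: "d_min_plus a k = r1\<^sup>2" unfolding r1_def D_def using dmin_eq[OF k De] .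
  have dp: "d_plus a k = a\<^sup>2/(4*k)" using d_plus_eq[OF a0 a1 k] .
  show ?thesis
  proof (cases "a_one_plus k < a")
    case True
    then show ?thesis using dmax1_eq[OF True] dmin dp r1sq r2sq by simp
  next
    case False
    have "d_max_plus a k = r2\<^sup>2" unfolding r2_def D_def using dmax2_eq[OF k De False] .
    then show ?thesis using dmin dp r1sq r2sq by simp
  qed
qed

lemma part_astar:
  fixes k :: real assumes k: "k > 0"
  shows "d_max_plus (a_star_plus k) k = d_min_plus (a_star_plus k) k"
  using astar_not_branch[OF k] astar_facts(3)[OF k]
  unfolding d_max_plus_def d_min_plus_def by simp

theorem corollary2p10:
  fixes k :: real
  assumes "k > 0"
  shows "continuous_on {(a, k'). 0 < k' \<and> a_star_plus k' \<le> a \<and> a \<le> 1} (\<lambda>(a, k'). d_min_plus a k')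
       \<and> continuous_on {(a, k'). 0 < k' \<and> a_star_plus k' \<le> a \<and> a \<le> 1} (\<lambda>(a, k'). d_max_plus a k')
       \<and> (\<forall>a\<in>{a_star_plus k..1}. 0 \<le> d_min_plus a k \<and> d_min_plus a k \<le> d_max_plus a k
                                  \<and> d_max_plus a k \<le> d_plus a k)
       \<and> d_max_plus (a_star_plus k) k = d_min_plus (a_star_plus k) k
       \<and> D_plus k = {(a, d). (a, d) \<in> H_strip \<and> a > a_star_plus k
                              \<and> d_min_plus a k < d \<and> d < d_max_plus a k}"
  using dmin_cont dmax_cont part_ineq[OF assms] part_astar[OF assms] Dplus_char[OF assms] by blast

end
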